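(* Every M-set in a Minkowski space is countable.
   Context: A Minkowski space is a finite-dimensional real normed space $(X,\|\cdot\|)$. For a set $S\subseteq X$, its midpoint set is $M(S)=\{\tfrac12(x+y): x,y\in S,\ x\neq y\}$. A set $S\subseteq X$ is an M-set if every vector in $M(S)$ has norm exactly $1$ and every vector in $S$ has norm strictly greater than $1$. *)

theory Defs
  imports "HOL-Analysis.Analysis"
begin

definition midpoint_set :: "'a::real_vector set \<Rightarrow> 'a set" where
  "midpoint_set S = {(1/2) *\<^sub>R (x + y) | x y. x \<in> S \<and> y \<in> S \<and> x \<noteq> y}"

definition M_set :: "'a::real_normed_vector set \<Rightarrow> bool" where
  "M_set S \<longleftrightarrow> (\<forall>m\<in>midpoint_set S. norm m = 1) \<and> (\<forall>x\<in>S. norm x > 1)"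

end

theory Submission
  imports Defs
begin

lemma dense_rat_comb:
  fixes B :: "'a::real_normed_vector set"
  assumes fB: "finite B" and sp: "span B = UNIV" and e: "e > 0"
  shows "\<exists>q\<in>PiE B (\<lambda>_. \<rat>). norm (x - (\<Sum>b\<in>B. q b *\<^sub>R b)) < e"
proof -
  obtain c where xc: "x = (\<Sum>b\<in>B. c b *\<^sub>R b)"
  proof -
    have "x \<in> range (\<lambda>u. \<Sum>v\<in>B. u v *\<^sub>R v)" using span_finite[OF fB] sp by simp
    thus ?thesis using that by blast
  qed
  define k where "k = e / ((real (card B) + 1))"
  have k: "k > 0" using e by (simp add: k_def)
  have "\<forall>b::'a. \<exists>r\<in>\<rat>. \<bar>c b - r\<bar> < k / (norm b + 1)"
  proof
    fix b :: 'a
    have pos: "k / (norm b + 1) > 0" using k by (simp add: add_nonneg_pos)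
    obtain r where r: "r \<in> \<rat>" "c b - k / (norm b + 1) < r" "r < c b"
      using Rats_dense_in_real[of "c b - k / (norm b + 1)" "c b"] pos by auto
    thus "\<exists>r\<in>\<rat>. \<bar>c b - r\<bar> < k / (norm b + 1)" by (intro bexI[of _ r]) auto
  qed
  then obtain q0 where q0: "\<And>b::'a. q0 b \<in> \<rat>" "\<And>b. \<bar>c b - q0 b\<bar> < k / (norm b + 1)"
    by metis
  define q where "q = restrict q0 B"
  have qP: "q \<in> PiE B (\<lambda>_. \<rat>)" using q0 by (simp add: q_def)
  have "(\<Sum>b\<in>B. q b *\<^sub>R b) = (\<Sum>b\<in>B. q0 b *\<^sub>R b)"
    by (rule sum.cong) (auto simp: q_def)
  hence "x - (\<Sum>b\<in>B. q b *\<^sub>R b) = (\<Sum>b\<in>B. (c b - q0 b) *\<^sub>R b)"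
    by (simp add: xc scaleR_diff_left sum_subtractf)
  hence "norm (x - (\<Sum>b\<in>B. q b *\<^sub>R b)) \<le> (\<Sum>b\<in>B. \<bar>c b - q0 b\<bar> * norm b)"
    using norm_sum[of "\<lambda>b. (c b - q0 b) *\<^sub>R b" B] by simp
  also have "\<dots> \<le> (\<Sum>b\<in>B. k)"
  proof (rule sum_mono)
    fix b :: 'a
    have "\<bar>c b - q0 b\<bar> * norm b \<le> \<bar>c b - q0 b\<bar> * (norm b + 1)"
      by (simp add: mult_left_mono)
    also have "\<dots> \<le> k"
    proof -
      have "0 < norm b + 1" by (simp add: add_nonneg_pos)
      hence "\<bar>c b - q0 b\<bar> * (norm b + 1) < k" using q0(2)[of b] by (simp add: less_divide_eq)
      thus ?thesis by simp
    qed
    finally show "\<bar>c b - q0 b\<bar> * norm b \<le> k" .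
  qed
  also have "\<dots> = real (card B) * k" by simp
  also have "\<dots> < e"
  proof -
    have "real (card B) * k = e * (real (card B) / (real (card B) + 1))" by (simp add: k_def)
    also have "\<dots> < e * 1" using e by (intro mult_strict_left_mono) auto
    finally show ?thesis by simp
  qed
  finally show ?thesis using qP by blast
qed

theorem mainTheorem3:
  fixes S :: "'a::real_normed_vector set"
  assumes fin_dim: "\<exists>B. finite B \<and> span B = (UNIV :: 'a set)"
    and M: "M_set S"
  shows "countable S"
proof -
  obtain B :: "'a set" where fB: "finite B" and sp: "span B = UNIV" using fin_dim by blast
  define D where "D = (\<lambda>q. \<Sum>b\<in>B. q b *\<^sub>R b) ` PiE B (\<lambda>_. \<rat>)"
  have cD: "countable D" unfolding D_def
    by (intro countable_image countable_PiE fB countable_rat)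
  have gt: "\<And>x. x \<in> S \<Longrightarrow> norm x > 1" using M by (simp add: M_set_def)
  have sep: "norm (x - y) \<ge> 2 * norm x - 2" if "x \<in> S" "y \<in> S" "x \<noteq> y" for x y
  proof -
    have "(1/2) *\<^sub>R (x + y) \<in> midpoint_set S" using that unfolding midpoint_set_def by blast
    hence "norm ((1/2) *\<^sub>R (x + y)) = 1" using M unfolding M_set_def by blast
    hence n: "norm (x + y) = 2" by simp
    have "2 * norm x = norm ((x + y) + (x - y))"
    proof -
    have "(x + y) + (x - y) = 2 *\<^sub>R x" by (simp add: scaleR_2)
    thus ?thesis by simp
  qed
    also have "\<dots> \<le> norm (x + y) + norm (x - y)" by (rule norm_triangle_ineq)
    finally show ?thesis using n by simp
  qed
  have "\<forall>x\<in>S. \<exists>d\<in>D. norm (x - d) < norm x - 1"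
  proof
    fix x assume "x \<in> S"
    then obtain q where "q\<in>PiE B (\<lambda>_. \<rat>)" "norm (x - (\<Sum>b\<in>B. q b *\<^sub>R b)) < norm x - 1"
      using dense_rat_comb[OF fB sp, of "norm x - 1" x] gt by auto
    thus "\<exists>d\<in>D. norm (x - d) < norm x - 1" unfolding D_def by blast
  qed
  then obtain d where d: "\<And>x. x \<in> S \<Longrightarrow> d x \<in> D" "\<And>x. x \<in> S \<Longrightarrow> norm (x - d x) < norm x - 1"
    by metis
  have "inj_on d S"
  proof (rule inj_onI, rule ccontr)
    fix x y assume xy: "x \<in> S" "y \<in> S" "d x = d y" "x \<noteq> y"
    have "x - y = (x - d x) - (y - d y)" using xy(3) by simp
    hence "norm (x - y) \<le> norm (x - d x) + norm (y - d y)"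
      by (metis norm_triangle_ineq4)
    also have "\<dots> < norm x - 1 + (norm y - 1)" using d(2)[OF xy(1)] d(2)[OF xy(2)] by linarith
    finally have "norm (x - y) < norm x + norm y - 2" by simp
    moreover have "norm (x - y) \<ge> 2 * norm x - 2" using sep xy by blast
    moreover have "norm (y - x) \<ge> 2 * norm y - 2" using sep xy by metis
    moreover have "norm (y - x) = norm (x - y)" by (rule norm_minus_commute)
    ultimately show False by linarith
  qed
  moreover have "countable (d ` S)" using cD d(1) by (meson countable_subset image_subsetI)
  ultimately show ?thesis using countable_image_inj_on by blast
qed

end
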